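(* Let $G$ be a $2$-edge-connected cubic multigraph (loopless) of order $n$ such that there is exactly one pair of vertices $\{u,v\}$ joined by more than one edge, and they are joined by exactly two edges, and such that $G$ is claw-free and diamond-free. Then $\gamma_P(G) \le (n-2)/6$.
   Context: A multigraph is claw-free (resp. diamond-free) if its underlying simple graph has no induced subgraph isomorphic to $K_{1,3}$ (resp. to the diamond $K_4-e$). A multigraph is cubic if every vertex is incident with exactly three edges (counting multiplicity). For $S \subseteq V(G)$: initially all vertices of $S$ and their neighbors are observed; then, repeatedly, any vertex that is the only unobserved neighbor of some observed vertex becomes observed. $S$ is a power dominating set if eventually all vertices are observed; $\gamma_P(G)$ is the minimum size of a power dominating set. *)

theory Defs
  imports Complex_Main
begin

text \<open>A finite loopless multigraph is given by a finite vertex set V and a symmetric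
edge-multiplicity function m (m x y = number of edges joining x and y).\<close>

definition multigraph :: "'a set \<Rightarrow> ('a \<Rightarrow> 'a \<Rightarrow> nat) \<Rightarrow> bool" where
  "multigraph V m \<longleftrightarrow> finite V \<and> (\<forall>x y. m x y = m y x) \<and> (\<forall>x. m x x = 0)
     \<and> (\<forall>x y. m x y > 0 \<longrightarrow> x \<in> V \<and> y \<in> V)"

definition adj :: "('a \<Rightarrow> 'a \<Rightarrow> nat) \<Rightarrow> 'a \<Rightarrow> 'a \<Rightarrow> bool" where
  "adj m x y \<longleftrightarrow> 0 < m x y"

definition cubic :: "'a set \<Rightarrow> ('a \<Rightarrow> 'a \<Rightarrow> nat) \<Rightarrow> bool" where
  "cubic V m \<longleftrightarrow> (\<forall>v\<in>V. (\<Sum>w\<in>V. m v w) = 3)"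

definition connected_mg :: "'a set \<Rightarrow> ('a \<Rightarrow> 'a \<Rightarrow> nat) \<Rightarrow> bool" where
  "connected_mg V m \<longleftrightarrow> V \<noteq> {} \<and> (\<forall>x\<in>V. \<forall>y\<in>V. (adj m)\<^sup>*\<^sup>* x y)"

definition del_edge :: "('a \<Rightarrow> 'a \<Rightarrow> nat) \<Rightarrow> 'a \<Rightarrow> 'a \<Rightarrow> 'a \<Rightarrow> 'a \<Rightarrow> nat" where
  "del_edge m x y = (\<lambda>a b. if {a, b} = {x, y} then m a b - 1 else m a b)"

definition two_edge_connected :: "'a set \<Rightarrow> ('a \<Rightarrow> 'a \<Rightarrow> nat) \<Rightarrow> bool" where
  "two_edge_connected V m \<longleftrightarrow> connected_mg V m \<and>
     (\<forall>x y. 0 < m x y \<longrightarrow> connected_mg V (del_edge m x y))"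

definition claw_free :: "'a set \<Rightarrow> ('a \<Rightarrow> 'a \<Rightarrow> nat) \<Rightarrow> bool" where
  "claw_free V m \<longleftrightarrow> \<not> (\<exists>c\<in>V. \<exists>a\<in>V. \<exists>b\<in>V. \<exists>d\<in>V.
      adj m c a \<and> adj m c b \<and> adj m c d \<and> a \<noteq> b \<and> a \<noteq> d \<and> b \<noteq> d
      \<and> \<not> adj m a b \<and> \<not> adj m a d \<and> \<not> adj m b d)"

definition diamond_free :: "'a set \<Rightarrow> ('a \<Rightarrow> 'a \<Rightarrow> nat) \<Rightarrow> bool" where
  "diamond_free V m \<longleftrightarrow> \<not> (\<exists>a\<in>V. \<exists>b\<in>V. \<exists>c\<in>V. \<exists>d\<in>V.
      distinct [a, b, c, d] \<and> \<not> adj m a b \<and> adj m a c \<and> adj m a d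
      \<and> adj m b c \<and> adj m b d \<and> adj m c d)"

inductive_set observed :: "'a set \<Rightarrow> ('a \<Rightarrow> 'a \<Rightarrow> nat) \<Rightarrow> 'a set \<Rightarrow> 'a set"
  for V m S where
  dom_self: "v \<in> S \<Longrightarrow> v \<in> observed V m S"
| dom_nbr: "u \<in> S \<Longrightarrow> adj m u v \<Longrightarrow> v \<in> observed V m S"
| propagate: "w \<in> observed V m S \<Longrightarrow> adj m w v \<Longrightarrow>
         (\<forall>x\<in>V. adj m w x \<and> x \<noteq> v \<longrightarrow> x \<in> observed V m S) \<Longrightarrow> v \<in> observed V m S"

definition power_dominating :: "'a set \<Rightarrow> ('a \<Rightarrow> 'a \<Rightarrow> nat) \<Rightarrow> 'a set \<Rightarrow> bool" where
  "power_dominating V m S \<longleftrightarrow> S \<subseteq> V \<and> V \<subseteq> observed V m S"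

definition power_domination_number :: "'a set \<Rightarrow> ('a \<Rightarrow> 'a \<Rightarrow> nat) \<Rightarrow> nat" where
  "power_domination_number V m = Min {card S | S. power_dominating V m S}"

end

theory Submission
  imports Defs
begin

locale cg =
  fixes V :: "'a set" and m :: "'a \<Rightarrow> 'a \<Rightarrow> nat" and u v :: 'a
  assumes mg: "multigraph V m" and tec: "two_edge_connected V m" and cub: "cubic V m"
    and uv: "u \<noteq> v" and muv: "m u v = 2" and uniq: "\<And>x y. 1 < m x y \<Longrightarrow> {x,y} = {u,v}"
    and cf: "claw_free V m" and df: "diamond_free V m"
begin

lemma msym: "m x y = m y x" using mg unfolding multigraph_def by blast
lemma mloop: "m x x = 0" using mg unfolding multigraph_def by blast
lemma finV: "finite V" using mg unfolding multigraph_def by blast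
lemma adjV: "adj m x y \<Longrightarrow> x \<in> V \<and> y \<in> V" using mg unfolding multigraph_def adj_def by blast
lemma adj_sym: "adj m x y = adj m y x" unfolding adj_def using msym by simp
lemma adj_irr: "\<not> adj m x x" unfolding adj_def using mloop by simp
lemma uV: "u \<in> V" and vV: "v \<in> V" using adjV[of u v] muv unfolding adj_def by auto

lemma le1: "{x,y} \<noteq> {u,v} \<Longrightarrow> m x y \<le> 1"
  using uniq[of x y] by linarith

definition N where "N x = {y. adj m x y}"

lemma N_V: "N x \<subseteq> V" unfolding N_def using adjV by blast
lemma finN: "finite (N x)" using N_V finV finite_subset by blast
lemma inN: "y \<in> N x \<longleftrightarrow> adj m x y" unfolding N_def by simp

lemma deg: "x \<in> V \<Longrightarrow> (\<Sum>w\<in>V. m x w) = 3" using cub unfolding cubic_def by blast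

lemma sum01: assumes "\<And>w. w \<in> A \<Longrightarrow> m x w \<le> 1" "finite A"
  shows "(\<Sum>w\<in>A. m x w) = card {w\<in>A. adj m x w}"
proof -
  have "(\<Sum>w\<in>A. m x w) = (\<Sum>w\<in>A. if adj m x w then 1 else 0)"
  proof (rule sum.cong)
    fix w assume "w \<in> A"
    hence "m x w \<le> 1" using assms(1) by blast
    thus "m x w = (if adj m x w then 1 else 0)" unfolding adj_def by auto
  qed simp
  also have "\<dots> = card {w\<in>A. adj m x w}"
    using assms(2) by (simp add: sum.If_cases Int_def)
  finally show ?thesis .
qed

lemma cardN3: assumes "x \<in> V" "x \<noteq> u" "x \<noteq> v" shows "card (N x) = 3"
proof -
  have "(\<Sum>w\<in>V. m x w) = card {w\<in>V. adj m x w}"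
    by (rule sum01) (use le1 assms finV in auto)
  moreover have "{w\<in>V. adj m x w} = N x" unfolding N_def using adjV by blast
  ultimately show ?thesis using deg assms by simp
qed

lemma Nend: assumes "{a,b} = {u,v}" shows "\<exists>y. N a = {b,y} \<and> y \<noteq> b \<and> m a y = 1"
proof -
  have ab: "a \<noteq> b" "a \<in> V" "b \<in> V" "m a b = 2" using assms uv uV vV muv msym by (auto simp: doubleton_eq_iff)
  have "(\<Sum>w\<in>V. m a w) = m a b + (\<Sum>w\<in>V-{b}. m a w)"
    using sum.remove[OF finV ab(3), of "m a"] ab by simp
  hence s: "(\<Sum>w\<in>V-{b}. m a w) = 1" using deg[OF ab(2)] ab by simp
  have "(\<Sum>w\<in>V-{b}. m a w) = card {w\<in>V-{b}. adj m a w}"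
  proof (rule sum01)
    fix w assume "w \<in> V - {b}"
    hence "{a,w} \<noteq> {u,v}" using assms ab by (auto simp: doubleton_eq_iff)
    thus "m a w \<le> 1" by (rule le1)
  qed (use finV in auto)
  hence "card {w\<in>V-{b}. adj m a w} = 1" using s by simp
  then obtain y where y: "{w\<in>V-{b}. adj m a w} = {y}" by (auto simp: card_1_singleton_iff)
  have "N a = insert b {w\<in>V-{b}. adj m a w}"
    using ab adjV unfolding N_def adj_def by auto
  hence "N a = {b,y}" using y by simp
  moreover have "y \<noteq> b" using y by auto
  moreover have "m a y = 1"
  proof -
    have "y \<in> V - {b}" "adj m a y" using y by auto
    moreover have "{a,y} \<noteq> {u,v}" using assms ab \<open>y \<in> V - {b}\<close> by (auto simp: doubleton_eq_iff)
    ultimately show ?thesis using le1[of a y] unfolding adj_def by linarith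
  qed
  ultimately show ?thesis by blast
qed

definition u' where "u' = (SOME y. N u = {v,y} \<and> y \<noteq> v \<and> m u y = 1)"
definition v' where "v' = (SOME y. N v = {u,y} \<and> y \<noteq> u \<and> m v y = 1)"

lemma u'_prop: "N u = {v,u'} \<and> u' \<noteq> v \<and> m u u' = 1"
  unfolding u'_def by (rule someI_ex, rule Nend) simp
lemma v'_prop: "N v = {u,v'} \<and> v' \<noteq> u \<and> m v v' = 1"
  unfolding v'_def by (rule someI_ex, rule Nend) auto

lemma u'_facts: "u' \<in> V" "u' \<noteq> u" "u' \<noteq> v" "adj m u u'" "adj m u' u"
  using u'_prop adj_irr inN[of u' u] N_V[of u] adj_sym by auto
lemma v'_facts: "v' \<in> V" "v' \<noteq> u" "v' \<noteq> v" "adj m v v'" "adj m v' v"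
  using v'_prop adj_irr inN[of v' v] N_V[of v] adj_sym by auto

lemma bridge:
  assumes C: "C \<subseteq> V" "x \<in> C" "y \<notin> C" "y \<in> V" "m x y = 1"
    and cl: "\<And>a b. a \<in> C \<Longrightarrow> b \<notin> C \<Longrightarrow> adj m a b \<Longrightarrow> a = x \<and> b = y"
  shows False
proof -
  let ?m = "del_edge m x y"
  have "connected_mg V ?m" using tec C unfolding two_edge_connected_def by auto
  hence r: "(adj ?m)\<^sup>*\<^sup>* x y" using C unfolding connected_mg_def by blast
  have "z \<in> C" if "(adj ?m)\<^sup>*\<^sup>* x z" for z
    using that
  proof (induction rule: rtranclp_induct)
    case base then show ?case using C by simp
  next
    case (step z w)
    show ?case
    proof (rule ccontr)
      assume "w \<notin> C"
      have "adj m z w" using step(2) unfolding adj_def del_edge_def by (auto split: if_splits)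
      hence "z = x \<and> w = y" using cl step(3) \<open>w \<notin> C\<close> by blast
      thus False using step(2) C(5) unfolding adj_def del_edge_def by auto
    qed
  qed
  thus False using r C by blast
qed

lemma adj_symI: "adj m x y \<Longrightarrow> adj m y x" using adj_sym by blast

definition V' where "V' = V - {u,v}"

lemma V'I: "x \<in> V \<Longrightarrow> x \<noteq> u \<Longrightarrow> x \<noteq> v \<Longrightarrow> x \<in> V'" unfolding V'_def by auto
lemma V'D: "x \<in> V' \<Longrightarrow> x \<in> V \<and> x \<noteq> u \<and> x \<noteq> v" unfolding V'_def by auto

lemma m1: "x \<in> V' \<Longrightarrow> adj m x y \<Longrightarrow> m x y = 1"
  using le1[of x y] V'D[of x] unfolding adj_def by (auto simp: doubleton_eq_iff)

lemma cardN3': "x \<in> V' \<Longrightarrow> card (N x) = 3" using cardN3 V'D by blast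

lemma third: assumes "card (N x) = 3" "a \<in> N x" "b \<in> N x" "a \<noteq> b"
  shows "\<exists>c. N x = {a,b,c} \<and> c \<noteq> a \<and> c \<noteq> b"
proof -
  have "card (N x - {a,b}) = 1" using assms finN by (simp add: card_Diff_subset)
  then obtain c where c: "N x - {a,b} = {c}" by (auto simp: card_1_singleton_iff)
  hence "N x = {a,b,c}" using assms by blast
  moreover have "c \<noteq> a" "c \<noteq> b" using c by auto
  ultimately show ?thesis by blast
qed

lemma cardNu: "card (N u) \<le> 2" using u'_prop by (simp add: card_insert_if)
lemma cardNv: "card (N v) \<le> 2" using v'_prop by (simp add: card_insert_if)

lemma u'v': "u' \<noteq> v'"
proof
  assume eq: "u' = v'"
  have pV: "u' \<in> V'" using u'_facts by (simp add: V'I)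
  have "u \<in> N u'" "v \<in> N u'" using u'_facts v'_facts eq by (auto simp: inN)
  then obtain c where c: "N u' = {u,v,c}" "c \<noteq> u" "c \<noteq> v"
    using third[OF cardN3'[OF pV]] uv by blast
  have cV: "c \<in> V" using c N_V by blast
  have cp: "c \<noteq> u'" using c adj_irr by (auto simp: inN)
  show False
  proof (rule bridge[of "{u,v,u'}" u' c])
    show "{u,v,u'} \<subseteq> V" using uV vV u'_facts by auto
    show "m u' c = 1" using m1[OF pV] c by (auto simp: inN)
    fix a b assume "a \<in> {u,v,u'}" "b \<notin> {u,v,u'}" "adj m a b"
    thus "a = u' \<and> b = c" using u'_prop v'_prop c eq by (auto simp: inN[symmetric])
  qed (use c cp cV in auto)
qed

lemma noK4: assumes d: "distinct [x,a,b,c]" and xV: "x \<in> V"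
  and h: "adj m x a" "adj m x b" "adj m x c" "adj m a b" "adj m a c" "adj m b c"
  shows False
proof -
  let ?C = "{x,a,b,c}"
  have cC: "card ?C = 4" using d by simp
  have cl: "N y \<subseteq> ?C \<and> y \<noteq> u" if y: "y \<in> ?C" for y
  proof -
    have hs: "adj m a x" "adj m b x" "adj m c x" "adj m b a" "adj m c a" "adj m c b"
      using h adj_symI by blast+
    have sub: "?C - {y} \<subseteq> N y" using h hs y by (auto simp: inN)
    have c3: "card (?C - {y}) = 3" using cC y by simp
    have yV: "y \<in> V" using y h adjV by blast
    have "y \<noteq> u" using card_mono[OF finN sub] c3 cardNu by auto
    moreover have "y \<noteq> v" using card_mono[OF finN sub] c3 cardNv by auto
    ultimately have "card (N y) = 3" using cardN3 yV by blast
    hence "?C - {y} = N y" using card_subset_eq[OF finN sub] c3 by simp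
    thus ?thesis using \<open>y \<noteq> u\<close> by blast
  qed
  have "connected_mg V m" using tec unfolding two_edge_connected_def by blast
  hence r: "(adj m)\<^sup>*\<^sup>* x u" using xV uV unfolding connected_mg_def by blast
  have "z \<in> ?C" if "(adj m)\<^sup>*\<^sup>* x z" for z
    using that
  proof (induction rule: rtranclp_induct)
    case base then show ?case by simp
  next
    case (step z w) thus ?case using cl[of z] by (auto simp: inN)
  qed
  thus False using r cl by blast
qed

lemma tri_char0: assumes x: "x \<in> V'"
  shows "\<exists>a b c. distinct [x,a,b,c] \<and> N x = {a,b,c} \<and> adj m a b \<and> \<not> adj m a c \<and> \<not> adj m b c"
proof -
  obtain p q r where pqr: "N x = {p,q,r}" "p \<noteq> q" "q \<noteq> r" "p \<noteq> r"
    using cardN3'[OF x] by (auto simp: card_3_iff)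
  have xV: "x \<in> V" using x V'D by blast
  have ax: "adj m x p" "adj m x q" "adj m x r" using pqr by (auto simp: inN[symmetric])
  have V: "p \<in> V" "q \<in> V" "r \<in> V" using ax adjV by auto
  have dx: "x \<noteq> p" "x \<noteq> q" "x \<noteq> r" using ax adj_irr by auto
  have axs: "adj m p x" "adj m q x" "adj m r x" using ax adj_symI by blast+
  have cf': "\<forall>c\<in>V. \<forall>a\<in>V. \<forall>b\<in>V. \<forall>d\<in>V. \<not> (adj m c a \<and> adj m c b \<and> adj m c d \<and> a \<noteq> b \<and> a \<noteq> d \<and> b \<noteq> d
      \<and> \<not> adj m a b \<and> \<not> adj m a d \<and> \<not> adj m b d)" using cf unfolding claw_free_def by blast
  have nclaw: "adj m p q \<or> adj m p r \<or> adj m q r"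
    using cf'[rule_format, OF xV V] ax pqr by blast
  have df': "\<forall>a\<in>V. \<forall>b\<in>V. \<forall>c\<in>V. \<forall>d\<in>V. \<not> (distinct [a, b, c, d] \<and> \<not> adj m a b \<and> adj m a c \<and> adj m a d
      \<and> adj m b c \<and> adj m b d \<and> adj m c d)" using df unfolding diamond_free_def by blast
  note dia = df'[rule_format]
  have d1: "adj m q r" if h: "adj m p q" "adj m p r"
  proof (rule ccontr)
    assume n: "\<not> adj m q r"
    have s: "adj m q p" "adj m r p" using h adj_sym by auto
    have "distinct [q,r,x,p]" using pqr dx by auto
    thus False using dia[OF V(2) V(3) xV V(1)] n s axs ax by blast
  qed
  have d2: "adj m p r" if h: "adj m p q" "adj m q r"
  proof (rule ccontr)
    assume n: "\<not> adj m p r"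
    have s: "adj m q p" "adj m r q" using h adj_sym by auto
    have "distinct [p,r,x,q]" using pqr dx by auto
    thus False using dia[OF V(1) V(3) xV V(2)] n s h axs ax by blast
  qed
  have d3: "adj m p q" if h: "adj m p r" "adj m q r"
  proof (rule ccontr)
    assume n: "\<not> adj m p q"
    have "distinct [p,q,x,r]" using pqr dx by auto
    thus False using dia[OF V(1) V(2) xV V(3)] n h axs ax by blast
  qed
  have nk: "\<not> (adj m p q \<and> adj m p r \<and> adj m q r)"
  proof
    assume h: "adj m p q \<and> adj m p r \<and> adj m q r"
    have "distinct [x,p,q,r]" using pqr dx by simp
    thus False using noK4[of x p q r] xV ax h by blast
  qed
  have sy: "adj m q p = adj m p q" "adj m r p = adj m p r" "adj m r q = adj m q r" using adj_sym by auto
  show ?thesis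
  proof (cases "adj m p q")
    case True
    hence "\<not> adj m p r" "\<not> adj m q r" using d1 d2 nk by blast+
    moreover have "distinct [x,p,q,r]" using pqr dx by simp
    ultimately show ?thesis using True pqr(1) by blast
  next
    case False
    show ?thesis
    proof (cases "adj m p r")
      case True
      hence "\<not> adj m q r" using d3 False by blast
      moreover have "distinct [x,p,r,q]" using pqr dx by simp
      moreover have "N x = {p,r,q}" using pqr(1) by blast
      ultimately show ?thesis using True False sy by metis
    next
      case F2: False
      hence "adj m q r" using nclaw False by blast
      moreover have "distinct [x,q,r,p]" using pqr dx by simp
      moreover have "N x = {q,r,p}" using pqr(1) by blast
      ultimately show ?thesis using F2 False sy by metis
    qed
  qed
qed


lemma tri_nuv: assumes x: "x \<in> V'" and h: "adj m x a" "adj m x b" "adj m a b"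
  shows "a \<noteq> u \<and> a \<noteq> v"
proof -
  have xne: "x \<noteq> u" "x \<noteq> v" using x V'D by auto
  have xb: "x \<noteq> b" using h adj_irr by metis
  have hs: "adj m a x" "adj m b x" "adj m b a" using h adj_sym by auto
  have "a \<noteq> u"
  proof
    assume "a = u"
    hence "x \<in> N u" "b \<in> N u" using hs h by (auto simp: inN)
    hence "x = u'" "b = v" using u'_prop xne xb by auto
    hence "x \<in> N v" using h by (simp add: inN adj_sym)
    hence "x = v'" using v'_prop xne by auto
    thus False using \<open>x = u'\<close> u'v' by simp
  qed
  moreover have "a \<noteq> v"
  proof
    assume "a = v"
    hence "x \<in> N v" "b \<in> N v" using hs h by (auto simp: inN)
    hence "x = v'" "b = u" using v'_prop xne xb by auto
    hence "x \<in> N u" using h by (simp add: inN adj_sym)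
    hence "x = u'" using u'_prop xne by auto
    thus False using \<open>x = v'\<close> u'v' by simp
  qed
  ultimately show ?thesis by blast
qed

definition tri where "tri x = insert x {y. adj m x y \<and> (\<exists>z. adj m x z \<and> adj m y z)}"
definition e where "e x = (SOME c. adj m x c \<and> c \<notin> tri x)"

lemma tri_char: assumes x: "x \<in> V'"
  shows "\<exists>a b c. distinct [x,a,b,c] \<and> N x = {a,b,c} \<and> adj m a b \<and> \<not> adj m a c \<and> \<not> adj m b c
     \<and> tri x = {x,a,b} \<and> e x = c \<and> a \<in> V' \<and> b \<in> V'"
proof -
  obtain a b c where abc: "distinct [x,a,b,c]" "N x = {a,b,c}" "adj m a b" "\<not> adj m a c" "\<not> adj m b c"
    using tri_char0[OF x] by blast
  have ax: "adj m x a" "adj m x b" "adj m x c" using abc(2) by (auto simp: inN[symmetric])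
  have sy: "\<not> adj m c a" "\<not> adj m c b" "adj m b a" using abc(3-5) adj_sym by auto
  have t: "tri x = {x,a,b}"
  proof
    show "tri x \<subseteq> {x,a,b}"
    proof
      fix y assume y: "y \<in> tri x"
      show "y \<in> {x,a,b}"
      proof (rule ccontr)
        assume ny: "y \<notin> {x,a,b}"
        from y ny obtain z where z: "adj m x y" "adj m x z" "adj m y z" unfolding tri_def by auto
        have "y \<in> N x" "z \<in> N x" using z by (auto simp: inN)
        hence yc: "y = c" using ny abc(2) by auto
        have "z \<noteq> y" using z adj_irr by metis
        hence "z = a \<or> z = b" using \<open>z \<in> N x\<close> abc(2) yc by auto
        thus False using z(3) yc sy by blast
      qed
    qed
  next
    show "{x,a,b} \<subseteq> tri x" using ax abc(3) sy unfolding tri_def by blast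
  qed
  have ec: "e x = c"
    unfolding e_def
  proof (rule someI2[of _ c])
    show "adj m x c \<and> c \<notin> tri x" using ax t abc(1) by auto
  next
    fix c' assume "adj m x c' \<and> c' \<notin> tri x"
    thus "c' = c" using abc(2) t by (auto simp: inN[symmetric])
  qed
  have "a \<in> V'" using tri_nuv[OF x ax(1) ax(2) abc(3)] ax adjV V'I by blast
  moreover have "b \<in> V'" using tri_nuv[OF x ax(2) ax(1) sy(3)] ax adjV V'I by blast
  ultimately show ?thesis using abc t ec by blast
qed


lemma tri_via: assumes a: "a \<in> V'" and h: "adj m a p" "adj m a q" "adj m p q" "p \<noteq> q"
  shows "tri a = {a,p,q}"
proof -
  obtain a1 b1 c1 where abc: "distinct [a,a1,b1,c1]" "N a = {a1,b1,c1}" "adj m a1 b1" "\<not> adj m a1 c1"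
     "\<not> adj m b1 c1" "tri a = {a,a1,b1}"
    using tri_char[OF a] by blast
  have sy: "\<not> adj m c1 a1" "\<not> adj m c1 b1" "adj m q p" using abc adj_sym h by auto
  have pq: "p \<in> {a1,b1,c1}" "q \<in> {a1,b1,c1}" using h abc(2) by (auto simp: inN[symmetric])
  have "p \<noteq> c1"
  proof
    assume "p = c1"
    hence "q \<in> {a1,b1}" using pq h(4) by auto
    thus False using h(3) abc(4,5) \<open>p = c1\<close> sy by auto
  qed
  moreover have "q \<noteq> c1"
  proof
    assume "q = c1"
    hence "p \<in> {a1,b1}" using pq h(4) by auto
    thus False using h(3) abc(4,5) \<open>q = c1\<close> by auto
  qed
  ultimately have "{p,q} = {a1,b1}" using pq h(4) by auto
  thus ?thesis using abc(6) by auto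
qed

lemma tri_basic: assumes x: "x \<in> V'"
  shows "tri x \<subseteq> V'" "x \<in> tri x" "card (tri x) = 3" "N x = insert (e x) (tri x - {x})"
    "e x \<notin> tri x" "adj m x (e x)" "e x \<in> V"
proof -
  obtain a b c where abc: "distinct [x,a,b,c]" "N x = {a,b,c}" "adj m a b" "tri x = {x,a,b}" "e x = c"
    "a \<in> V'" "b \<in> V'"
    using tri_char[OF x] by blast
  show "tri x \<subseteq> V'" using abc x by auto
  show "x \<in> tri x" unfolding tri_def by simp
  show "card (tri x) = 3" using abc by simp
  show "N x = insert (e x) (tri x - {x})" using abc by auto
  show "e x \<notin> tri x" using abc by auto
  show "adj m x (e x)" using abc by (auto simp: inN[symmetric])
  thus "e x \<in> V" using adjV by blast
qed

lemma tri_adj: "x \<in> V' \<Longrightarrow> y \<in> tri x \<Longrightarrow> y \<noteq> x \<Longrightarrow> adj m x y"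
  using tri_basic(4)[of x] by (auto simp: inN[symmetric])

lemma adj_cases: "x \<in> V' \<Longrightarrow> adj m x y \<Longrightarrow> y \<in> tri x \<or> y = e x"
  using tri_basic(4)[of x] by (auto simp: inN[symmetric])

lemma tri_part: assumes x: "x \<in> V'" and y: "y \<in> tri x" shows "tri y = tri x"
proof (cases "y = x")
  case True thus ?thesis by simp
next
  case False
  obtain a b c where abc: "distinct [x,a,b,c]" "N x = {a,b,c}" "adj m a b" "tri x = {x,a,b}"
    "a \<in> V'" "b \<in> V'"
    using tri_char[OF x] by blast
  have ax: "adj m a x" "adj m b x" "adj m x a" "adj m x b" "adj m b a" using abc(2,3) adj_sym by (auto simp: inN[symmetric])
  have "y = a \<or> y = b" using y False abc(4) by auto
  thus ?thesis
  proof
    assume "y = a"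
    thus ?thesis using tri_via[OF abc(5) ax(1) abc(3) ax(4)] abc(1,4) by auto
  next
    assume "y = b"
    thus ?thesis using tri_via[OF abc(6) ax(2) ax(5) ax(3)] abc(1,4) by auto
  qed
qed

lemma tri_meet: "x \<in> V' \<Longrightarrow> y \<in> V' \<Longrightarrow> z \<in> tri x \<Longrightarrow> z \<in> tri y \<Longrightarrow> tri x = tri y"
  using tri_part by metis

lemma e_u': "e u' = u" and e_v': "e v' = v"
proof -
  have a: "u' \<in> V'" "v' \<in> V'" using u'_facts v'_facts V'I by auto
  have "u \<notin> tri u'" "v \<notin> tri v'" using tri_basic(1)[OF a(1)] tri_basic(1)[OF a(2)] V'D by blast+
  thus "e u' = u" "e v' = v" using adj_cases[OF a(1) u'_facts(5)] adj_cases[OF a(2) v'_facts(5)] by auto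
qed

lemma e_eq_u: assumes "x \<in> V'" "e x = u" shows "x = u'"
proof -
  have "adj m u x" using tri_basic(6)[OF assms(1)] assms(2) adj_symI by simp
  hence "x \<in> {v,u'}" using u'_prop inN by blast
  thus ?thesis using V'D[OF assms(1)] by blast
qed
lemma e_eq_v: assumes "x \<in> V'" "e x = v" shows "x = v'"
proof -
  have "adj m v x" using tri_basic(6)[OF assms(1)] assms(2) adj_symI by simp
  hence "x \<in> {u,v'}" using v'_prop inN by blast
  thus ?thesis using V'D[OF assms(1)] by blast
qed


lemma u'v'_tri: "v' \<notin> tri u'"
proof
  assume vin: "v' \<in> tri u'"
  have a: "u' \<in> V'" "v' \<in> V'" using u'_facts v'_facts V'I by auto
  have uin: "u' \<in> tri u'" using tri_basic(2)[OF a(1)] .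
  have "card (tri u' - {u',v'}) = 1" using tri_basic(3)[OF a(1)] vin uin u'v'
    by (simp add: card_Diff_subset)
  then obtain w where w: "tri u' - {u',v'} = {w}" by (auto simp: card_1_singleton_iff)
  have T: "tri u' = {u',v',w}" using w vin uin by blast
  have wne: "w \<noteq> u'" "w \<noteq> v'" using w by auto
  have wV: "w \<in> V'" using T tri_basic(1)[OF a(1)] by blast
  have Tv: "tri v' = tri u'" using tri_part[OF a(1) vin] .
  have Tw: "tri w = tri u'" using tri_part[OF a(1)] T by blast
  define y where "y = e w"
  have ynt: "y \<notin> tri w" using tri_basic(5)[OF wV] y_def by simp
  have yu: "y \<noteq> u" using e_eq_u[OF wV] wne y_def by blast
  have yv: "y \<noteq> v" using e_eq_v[OF wV] wne y_def by blast
  let ?C = "{u,v,u',v',w}"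
  show False
  proof (rule bridge[of ?C w y])
    show "?C \<subseteq> V" using uV vV a wV V'D by auto
    show "w \<in> ?C" by simp
    show "y \<notin> ?C" using ynt yu yv Tw T by auto
    show "y \<in> V" using tri_basic(7)[OF wV] y_def by simp
    show "m w y = 1" using m1[OF wV tri_basic(6)[OF wV]] y_def by simp
  next
    fix p q assume p: "p \<in> ?C" and q: "q \<notin> ?C" and pq: "adj m p q"
    have qT: "q \<notin> tri u'" using q T by blast
    have "p = u \<or> p = v \<or> p = u' \<or> p = v' \<or> p = w" using p by blast
    thus "p = w \<and> q = y"
    proof (elim disjE)
      assume "p = u" thus ?thesis using pq q u'_prop inN by blast
    next
      assume "p = v" thus ?thesis using pq q v'_prop inN by blast
    next
      assume "p = u'"
      hence "q \<in> tri u' \<or> q = u" using adj_cases[OF a(1)] pq e_u' by metis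
      thus ?thesis using qT q by blast
    next
      assume "p = v'"
      hence "q \<in> tri v' \<or> q = v" using adj_cases[OF a(2)] pq e_v' by metis
      thus ?thesis using qT q Tv by blast
    next
      assume "p = w"
      hence "q \<in> tri w \<or> q = y" using adj_cases[OF wV] pq y_def by metis
      thus ?thesis using qT Tw \<open>p = w\<close> by blast
    qed
  qed
qed

definition E where "E x = (if e x = u then v' else if e x = v then u' else e x)"

lemma E_props: assumes x: "x \<in> V'"
  shows "E x \<in> V'" "E (E x) = x" "E x \<notin> tri x"
proof -
  have a: "u' \<in> V'" "v' \<in> V'" using u'_facts v'_facts V'I by auto
  have vu: "v' \<notin> tri u'" by (rule u'v'_tri)
  have uv': "u' \<notin> tri v'"
  proof
    assume "u' \<in> tri v'"
    hence "tri u' = tri v'" using tri_part[OF a(2)] by blast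
    thus False using vu tri_basic(2)[OF a(2)] by blast
  qed
  have "E x \<in> V' \<and> E (E x) = x \<and> E x \<notin> tri x"
  proof (cases "e x = u")
    case True
    hence "x = u'" using e_eq_u[OF x] by blast
    moreover have "E v' = u'" unfolding E_def using e_v' uv by simp
    moreover have "E x = v'" unfolding E_def using True by simp
    ultimately show ?thesis using a vu by simp
  next
    case F1: False
    show ?thesis
    proof (cases "e x = v")
      case True
      hence "x = v'" using e_eq_v[OF x] by blast
      moreover have "E u' = v'" unfolding E_def using e_u' by simp
      moreover have "E x = u'" unfolding E_def using True F1 by simp
      ultimately show ?thesis using a uv' by simp
    next
      case False
      define c where "c = e x"
      have Ex: "E x = c" unfolding E_def c_def using F1 False by simp
      have cV: "c \<in> V'" using tri_basic(7)[OF x] F1 False V'I c_def by blast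
      have cnt: "c \<notin> tri x" using tri_basic(5)[OF x] c_def by simp
      have xnt: "x \<notin> tri c"
      proof
        assume "x \<in> tri c"
        hence "tri x = tri c" using tri_part[OF cV] by blast
        thus False using cnt tri_basic(2)[OF cV] by blast
      qed
      have "adj m c x" using tri_basic(6)[OF x] c_def adj_symI by simp
      hence "e c = x" using adj_cases[OF cV] xnt by blast
      hence "E c = x" unfolding E_def using V'D[OF x] by simp
      thus ?thesis using Ex cV cnt by simp
    qed
  qed
  thus "E x \<in> V'" "E (E x) = x" "E x \<notin> tri x" by auto
qed


lemma e_e: assumes x: "x \<in> V'" "e x \<noteq> u" "e x \<noteq> v" shows "e (e x) = x" "e x \<in> V'"
proof -
  have cV: "e x \<in> V'" using tri_basic(7)[OF x(1)] x V'I by blast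
  have Ex: "E x = e x" unfolding E_def using x by simp
  have "E (e x) = x" using E_props(2)[OF x(1)] Ex by simp
  moreover have "e (e x) \<noteq> u"
  proof
    assume "e (e x) = u"
    hence "e x = u'" "E (e x) = v'" using e_eq_u[OF cV] unfolding E_def by auto
    hence "x = v'" using \<open>E (e x) = x\<close> by simp
    thus False using e_v' x by simp
  qed
  moreover have "e (e x) \<noteq> v"
  proof
    assume "e (e x) = v"
    hence "e x = v'" "E (e x) = u'" using e_eq_v[OF cV] uv unfolding E_def by auto
    hence "x = u'" using \<open>E (e x) = x\<close> by simp
    thus False using e_u' x by simp
  qed
  ultimately show "e (e x) = x" unfolding E_def by simp
  show "e x \<in> V'" by (rule cV)
qed

definition Tri where "Tri = tri ` V'"
definition D where "D A = {x \<in> V'. (tri x \<in> A) \<noteq> (tri (E x) \<in> A)}"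

lemma finV': "finite V'" using finV unfolding V'_def by simp
lemma finTri: "finite Tri" unfolding Tri_def using finV' by simp
lemma finD: "finite (D A)" unfolding D_def using finV' by simp

lemma tri_iff: assumes "x \<in> V'" "t \<in> V'" shows "tri x = tri t \<longleftrightarrow> x \<in> tri t"
  using assms tri_part tri_basic(2) by metis

lemma E_inj: "inj_on E V'"
  by (rule inj_on_inverseI[where g = E]) (simp add: E_props(2))

lemma flip: fixes A :: "'a set set" assumes t: "t \<in> V'"
  defines "T \<equiv> tri t"
  defines "A' \<equiv> (A - {T}) \<union> ({T} - A)"
  shows "card (D A') + 4 * card (D A \<inter> T) = card (D A) + 6"
proof -
  define X where "X = T \<union> E ` T"
  have TV: "T \<subseteq> V'" unfolding T_def using tri_basic(1)[OF t] .
  have XV: "X \<subseteq> V'" unfolding X_def using TV E_props(1) by auto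
  have inT: "tri x = T \<longleftrightarrow> x \<in> T" if "x \<in> V'" for x
    unfolding T_def using tri_iff[OF that t] .
  have inET: "tri (E x) = T \<longleftrightarrow> x \<in> E ` T" if x: "x \<in> V'" for x
  proof -
    have "tri (E x) = T \<longleftrightarrow> E x \<in> T" using inT E_props(1)[OF x] by blast
    also have "\<dots> \<longleftrightarrow> x \<in> E ` T"
    proof
      assume "E x \<in> T" thus "x \<in> E ` T" using E_props(2)[OF x] by (metis image_eqI)
    next
      assume "x \<in> E ` T" then obtain y where "y \<in> T" "x = E y" by blast
      thus "E x \<in> T" using E_props(2) TV by auto
    qed
    finally show ?thesis .
  qed
  have disj: "T \<inter> E ` T = {}"
  proof (rule ccontr)
    assume "T \<inter> E ` T \<noteq> {}"
    then obtain y where y: "y \<in> T" "E y \<in> T" by blast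
    have yV: "y \<in> V'" using y TV by blast
    have "tri y = T" using inT[OF yV] y by simp
    thus False using E_props(3)[OF yV] y by simp
  qed
  have DA': "D A' = (D A - X) \<union> (X - D A)"
  proof -
    have "x \<in> D A' \<longleftrightarrow> x \<in> (D A - X) \<union> (X - D A)" for x
    proof (cases "x \<in> V'")
      case False thus ?thesis using XV unfolding D_def by auto
    next
      case True
      have EV: "E x \<in> V'" using E_props(1)[OF True] .
      have "\<not> (tri x = T \<and> tri (E x) = T)" using E_props(3)[OF True] tri_basic(2)[OF EV] by metis
      moreover have "x \<in> X \<longleftrightarrow> tri x = T \<or> tri (E x) = T" using inT[OF True] inET[OF True] X_def by blast
      ultimately show ?thesis using True unfolding D_def A'_def by auto
    qed
    thus ?thesis by blast
  qed
  have fX: "finite X" using XV finV' finite_subset by blast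
  have c1: "card (D A') = card (D A - X) + card (X - D A)"
    unfolding DA' by (rule card_Un_disjoint) (use finD fX in auto)
  have c2: "card (D A - X) = card (D A) - card (D A \<inter> X)"
    using finD by (metis card_Diff_subset_Int finite_Int Diff_Int2 inf.idem Int_commute card_Diff_subset inf_le1)
  have c3: "card (X - D A) = card X - card (D A \<inter> X)"
    using fX by (metis card_Diff_subset_Int Int_commute finite_Int)
  have fT: "finite T" using TV finV' finite_subset by blast
  have cT: "card T = 3" unfolding T_def using tri_basic(3)[OF t] .
  have cET: "card (E ` T) = 3" using card_image[OF inj_on_subset[OF E_inj TV]] cT by simp
  have cX: "card X = 6" unfolding X_def using card_Un_disjoint[OF fT _ disj] cT cET fT by simp
  have DE: "D A \<inter> E ` T = E ` (D A \<inter> T)"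
  proof -
    have sym: "x \<in> D A \<longleftrightarrow> E x \<in> D A" if "x \<in> V'" for x
      using that E_props[OF that] unfolding D_def by auto
    show ?thesis
    proof
      show "D A \<inter> E ` T \<subseteq> E ` (D A \<inter> T)"
      proof
        fix x assume "x \<in> D A \<inter> E ` T"
        then obtain y where y: "y \<in> T" "x = E y" "x \<in> D A" by blast
        have "y \<in> D A" using sym[of y] y TV by blast
        thus "x \<in> E ` (D A \<inter> T)" using y by blast
      qed
    next
      show "E ` (D A \<inter> T) \<subseteq> D A \<inter> E ` T" using sym TV by blast
    qed
  qed
  have cDX: "card (D A \<inter> X) = 2 * card (D A \<inter> T)"
  proof -
    have "D A \<inter> X = (D A \<inter> T) \<union> (D A \<inter> E ` T)" unfolding X_def by blast
    moreover have "card ((D A \<inter> T) \<union> (D A \<inter> E ` T)) = card (D A \<inter> T) + card (D A \<inter> E ` T)"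
      by (rule card_Un_disjoint) (use fT disj in auto)
    moreover have "card (D A \<inter> E ` T) = card (D A \<inter> T)"
      unfolding DE by (rule card_image[OF inj_on_subset[OF E_inj]]) (use TV in auto)
    ultimately show ?thesis by simp
  qed
  have le1: "card (D A \<inter> X) \<le> card (D A)" using finD by (simp add: card_mono)
  have le2: "card (D A \<inter> X) \<le> card X" using fX by (simp add: card_mono)
  show ?thesis using c1 c2 c3 cX cDX le1 le2 by simp
qed


lemma two_elems: assumes "2 \<le> card A" shows "\<exists>x y. x \<in> A \<and> y \<in> A \<and> x \<noteq> y"
proof -
  have "A \<noteq> {}" using assms by auto
  then obtain x where x: "x \<in> A" by blast
  have "finite A" using assms card.infinite by fastforce
  hence "card (A - {x}) \<ge> 1" using assms x by simp
  then obtain y where "y \<in> A - {x}" by (metis card.empty all_not_in_conv not_one_le_zero)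
  thus ?thesis using x by blast
qed

lemma good_exists: "\<exists>B. B \<subseteq> Tri \<and> 2 * card B \<le> card Tri \<and> (\<forall>t\<in>V'. 2 \<le> card (D B \<inter> tri t))"
proof -
  let ?f = "\<lambda>A. card (D A)"
  have fin: "finite (?f ` Pow Tri)" using finTri by simp
  have ne: "?f ` Pow Tri \<noteq> {}" by blast
  obtain A where A: "A \<in> Pow Tri" "?f A = Max (?f ` Pow Tri)" using Max_in[OF fin ne] by auto
  have mx: "?f A2 \<le> ?f A" if "A2 \<in> Pow Tri" for A2 using Max_ge[OF fin] that A(2) by simp
  have gA: "2 \<le> card (D A \<inter> tri t)" if t: "t \<in> V'" for t
  proof -
    have "tri t \<in> Tri" unfolding Tri_def using t by blast
    hence "(A - {tri t}) \<union> ({tri t} - A) \<in> Pow Tri" using A(1) by auto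
    hence "?f ((A - {tri t}) \<union> ({tri t} - A)) \<le> ?f A" by (rule mx)
    thus ?thesis using flip[OF t, of A] by linarith
  qed
  have Dc: "D (Tri - A) = D A"
  proof -
    have "x \<in> V' \<Longrightarrow> tri x \<in> Tri \<and> tri (E x) \<in> Tri" for x
      unfolding Tri_def using E_props(1) by blast
    thus ?thesis unfolding D_def by auto
  qed
  have cs: "card A + card (Tri - A) = card Tri"
    using A(1) finTri card_mono[OF finTri, of A] by (simp add: card_Diff_subset finite_subset)
  show ?thesis
  proof (cases "2 * card A \<le> card Tri")
    case True thus ?thesis using A(1) gA by blast
  next
    case False
    hence "2 * card (Tri - A) \<le> card Tri" using cs by linarith
    thus ?thesis using gA Dc by (intro exI[of _ "Tri - A"]) auto
  qed
qed

definition pick where "pick T = (SOME x. x \<in> T)"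

lemma obs_ext: assumes x: "x \<in> V'" and o: "tri x \<subseteq> observed V m S"
  shows "e x \<in> observed V m S"
proof (rule observed.propagate[of x])
  show "x \<in> observed V m S" using o tri_basic(2)[OF x] by blast
  show "adj m x (e x)" using tri_basic(6)[OF x] .
  show "\<forall>y\<in>V. adj m x y \<and> y \<noteq> e x \<longrightarrow> y \<in> observed V m S"
    using adj_cases[OF x] o by blast
qed

lemma obs_u_v: "u \<in> observed V m S \<Longrightarrow> u' \<in> observed V m S \<Longrightarrow> v \<in> observed V m S"
  by (rule observed.propagate[of u]) (use muv u'_prop inN in \<open>auto simp: adj_def\<close>)
lemma obs_v_v': "v \<in> observed V m S \<Longrightarrow> u \<in> observed V m S \<Longrightarrow> v' \<in> observed V m S"
  by (rule observed.propagate[of v]) (use v'_prop inN[symmetric] in \<open>auto\<close>)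
lemma obs_v_u: "v \<in> observed V m S \<Longrightarrow> v' \<in> observed V m S \<Longrightarrow> u \<in> observed V m S"
  by (rule observed.propagate[of v]) (use muv msym v'_prop inN in \<open>auto simp: adj_def\<close>)
lemma obs_u_u': "u \<in> observed V m S \<Longrightarrow> v \<in> observed V m S \<Longrightarrow> u' \<in> observed V m S"
  by (rule observed.propagate[of u]) (use u'_prop inN[symmetric] in \<open>auto\<close>)

lemma obs_E: assumes y: "y \<in> V'" and o: "tri y \<subseteq> observed V m S"
  shows "E y \<in> observed V m S \<and> e (E y) \<in> observed V m S"
proof -
  have ey: "e y \<in> observed V m S" by (rule obs_ext[OF y o])
  have yo: "y \<in> observed V m S" using o tri_basic(2)[OF y] by blast
  show ?thesis
  proof (cases "e y = u")
    case True
    hence yu: "y = u'" using e_eq_u[OF y] by blast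
    have "u \<in> observed V m S" using ey True by simp
    moreover hence "v \<in> observed V m S" using obs_u_v yo yu by blast
    moreover hence "v' \<in> observed V m S" using obs_v_v' \<open>u \<in> observed V m S\<close> by blast
    moreover have "E y = v'" unfolding E_def using True by simp
    ultimately show ?thesis using e_v' by simp
  next
    case F1: False
    show ?thesis
    proof (cases "e y = v")
      case True
      hence yv: "y = v'" using e_eq_v[OF y] by blast
      have "v \<in> observed V m S" using ey True by simp
      moreover hence "u \<in> observed V m S" using obs_v_u yo yv by blast
      moreover hence "u' \<in> observed V m S" using obs_u_u' \<open>v \<in> observed V m S\<close> by blast
      moreover have "E y = u'" unfolding E_def using True F1 by simp
      ultimately show ?thesis using e_u' by simp
    next
      case False
      have "E y = e y" unfolding E_def using F1 False by simp
      thus ?thesis using e_e[OF y F1 False] ey yo by simp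
    qed
  qed
qed

lemma obs_two: assumes x: "x \<in> V'" and h: "x1 \<in> tri x" "x2 \<in> tri x" "x1 \<noteq> x2"
  and o: "x1 \<in> observed V m S" "x2 \<in> observed V m S" "e x1 \<in> observed V m S"
  shows "tri x \<subseteq> observed V m S"
proof -
  have x1V: "x1 \<in> V'" using h tri_basic(1)[OF x] by blast
  have T1: "tri x1 = tri x" using tri_part[OF x h(1)] .
  have "card (tri x - {x1,x2}) = 1" using tri_basic(3)[OF x] h by (simp add: card_Diff_subset)
  then obtain x3 where x3: "tri x - {x1,x2} = {x3}" by (auto simp: card_1_singleton_iff)
  have T: "tri x = {x1,x2,x3}" using x3 h by blast
  have "x3 \<in> observed V m S"
  proof (rule observed.propagate[of x1])
    show "x1 \<in> observed V m S" by (rule o(1))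
    show "adj m x1 x3" using tri_adj[OF x1V] T1 x3 by blast
    show "\<forall>y\<in>V. adj m x1 y \<and> y \<noteq> x3 \<longrightarrow> y \<in> observed V m S"
    proof (intro ballI impI)
      fix y assume "y \<in> V" "adj m x1 y \<and> y \<noteq> x3"
      hence "y \<in> {x1,x2,x3} \<or> y = e x1" "y \<noteq> x3" using adj_cases[OF x1V] T1 T by auto
      thus "y \<in> observed V m S" using o by auto
    qed
  qed
  thus ?thesis using T o by simp
qed

lemma obs_B: assumes B: "B \<subseteq> Tri" "T \<in> B"
  shows "T \<subseteq> observed V m (pick ` B)"
proof -
  obtain t where t: "t \<in> V'" "T = tri t" using B unfolding Tri_def by blast
  define s where "s = pick T"
  have sT: "s \<in> T" unfolding s_def pick_def using tri_basic(2)[OF t(1)] t(2) by (metis someI)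
  have sS: "s \<in> pick ` B" using B s_def by blast
  have sV: "s \<in> V'" using sT t tri_basic(1) by blast
  have Ts: "tri s = T" using tri_part[OF t(1)] sT t by simp
  show ?thesis
  proof
    fix y assume y: "y \<in> T"
    show "y \<in> observed V m (pick ` B)"
    proof (cases "y = s")
      case True thus ?thesis using sS observed.dom_self by metis
    next
      case False
      hence "adj m s y" using tri_adj[OF sV] Ts y by blast
      thus ?thesis using sS observed.dom_nbr by metis
    qed
  qed
qed

lemma obs_all: assumes B: "B \<subseteq> Tri" "\<forall>t\<in>V'. 2 \<le> card (D B \<inter> tri t)"
  shows "V \<subseteq> observed V m (pick ` B)"
proof -
  let ?O = "observed V m (pick ` B)"
  have all: "tri t \<subseteq> ?O" if t: "t \<in> V'" for t
  proof (cases "tri t \<in> B")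
    case True thus ?thesis using obs_B B by blast
  next
    case False
    obtain x1 x2 where x: "x1 \<in> D B \<inter> tri t" "x2 \<in> D B \<inter> tri t" "x1 \<noteq> x2"
      using two_elems[OF B(2)[rule_format, OF t]] by blast
    have good: "xi \<in> ?O \<and> e xi \<in> ?O" if xi: "xi \<in> D B \<inter> tri t" for xi
    proof -
      have xV: "xi \<in> V'" using xi tri_basic(1)[OF t] by blast
      have "tri xi = tri t" using tri_part[OF t] xi by blast
      hence "tri (E xi) \<in> B" using xi False unfolding D_def by auto
      moreover have "tri (E xi) \<in> Tri" using E_props(1)[OF xV] unfolding Tri_def by blast
      ultimately have "tri (E xi) \<subseteq> ?O" using obs_B B(1) by blast
      hence "E (E xi) \<in> ?O \<and> e (E (E xi)) \<in> ?O" using obs_E E_props(1)[OF xV] by blast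
      thus ?thesis using E_props(2)[OF xV] by simp
    qed
    show ?thesis using obs_two[OF t, of x1 x2] x good by blast
  qed
  have V': "V' \<subseteq> ?O" using all tri_basic(2) by blast
  have a: "u' \<in> V'" "v' \<in> V'" using u'_facts v'_facts V'I by auto
  have "u \<in> ?O" using obs_ext[OF a(1) all[OF a(1)]] e_u' by simp
  moreover have "v \<in> ?O" using obs_ext[OF a(2) all[OF a(2)]] e_v' by simp
  ultimately show ?thesis using V' unfolding V'_def by blast
qed

theorem main: "\<exists>S. power_dominating V m S \<and> 6 * card S + 2 \<le> card V"
proof -
  obtain B where B: "B \<subseteq> Tri" "2 * card B \<le> card Tri" "\<forall>t\<in>V'. 2 \<le> card (D B \<inter> tri t)"
    using good_exists by blast
  let ?S = "pick ` B"
  have SV: "?S \<subseteq> V"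
  proof
    fix s assume "s \<in> ?S"
    then obtain T where T: "T \<in> B" "s = pick T" by blast
    obtain t where t: "t \<in> V'" "T = tri t" using T B(1) unfolding Tri_def by blast
    have "s \<in> T" unfolding T(2) pick_def using tri_basic(2)[OF t(1)] t(2) by (metis someI)
    thus "s \<in> V" using t tri_basic(1) V'D by blast
  qed
  have pd: "power_dominating V m ?S" unfolding power_dominating_def using SV obs_all[OF B(1) B(3)] by blast
  have cS: "card ?S \<le> card B" by (rule card_image_le) (use B(1) finTri finite_subset in blast)
  have UT: "\<Union>Tri = V'" unfolding Tri_def using tri_basic(1) tri_basic(2) by blast
  have "3 * card Tri = card (\<Union>Tri)"
  proof (rule card_partition)
    show "finite Tri" by (rule finTri)
    show "finite (\<Union>Tri)" using UT finV' by simp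
    show "\<And>c. c \<in> Tri \<Longrightarrow> card c = 3" unfolding Tri_def using tri_basic(3) by blast
    show "\<And>c1 c2. c1 \<in> Tri \<Longrightarrow> c2 \<in> Tri \<Longrightarrow> c1 \<noteq> c2 \<Longrightarrow> c1 \<inter> c2 = {}"
      unfolding Tri_def using tri_meet by blast
  qed
  hence c3: "3 * card Tri = card V'" using UT by simp
  have "card V' = card V - 2" unfolding V'_def using uV vV uv finV by (simp add: card_Diff_subset)
  moreover have "2 \<le> card V"
  proof -
    have "card {u,v} \<le> card V" using uV vV finV by (intro card_mono) auto
    thus ?thesis using uv by simp
  qed
  ultimately have "6 * card ?S + 2 \<le> card V" using c3 cS B(2) by linarith
  thus ?thesis using pd by blast
qed

end

theorem corollary2p7:
  fixes V :: "'a set" and m :: "'a \<Rightarrow> 'a \<Rightarrow> nat"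
  assumes "multigraph V m"
    and "two_edge_connected V m"
    and "cubic V m"
    and "\<exists>u v. u \<noteq> v \<and> m u v = 2 \<and> (\<forall>x y. 1 < m x y \<longrightarrow> {x, y} = {u, v})"
    and "claw_free V m"
    and "diamond_free V m"
  shows "real (power_domination_number V m) \<le> (real (card V) - 2) / 6"
proof -
  obtain u v where uv: "u \<noteq> v" "m u v = 2" "\<forall>x y. 1 < m x y \<longrightarrow> {x, y} = {u, v}"
    using assms(4) by blast
  have c: "cg V m u v"
  proof (rule cg.intro)
    show "\<And>x y. 1 < m x y \<Longrightarrow> {x, y} = {u, v}" using uv(3) by blast
  qed (fact assms(1) assms(2) assms(3) uv(1) uv(2) assms(5) assms(6))+
  interpret cg V m u v by (rule c)
  obtain S where S: "power_dominating V m S" "6 * card S + 2 \<le> card V" using main by blast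
  have fin: "finite {card S | S. power_dominating V m S}"
  proof (rule finite_subset)
    show "{card S | S. power_dominating V m S} \<subseteq> card ` Pow V"
      unfolding power_dominating_def by blast
    show "finite (card ` Pow V)" using finV by simp
  qed
  have "power_domination_number V m \<le> card S"
    unfolding power_domination_number_def
  proof (rule Min_le[OF fin])
    show "card S \<in> {card S | S. power_dominating V m S}" using S(1) by blast
  qed
  hence "real (power_domination_number V m) \<le> real (card S)" by simp
  moreover have "6 * real (card S) + 2 \<le> real (card V)" using S(2) by linarith
  ultimately show ?thesis by simp
qed

end
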